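(* For any instance of the $k$-Densest Subgraph problem on a graph with $n$ vertices, the DLA of QWOA satisfies $\dim(\mathfrak g_{\mathrm{QWOA},k\text{-Densest-Subgraph}})=\mathcal O(n^4)$.
   Context: $k$-Densest Subgraph on an undirected simple graph $G=(V,E)$, $V=\{1,\dots,n\}$, $1<k<n$: feasible solutions $\mathcal S'$ are the $z\in\{0,1\}^n$ of Hamming weight $k$, with cost $C(z)$ the number of edges with both endpoints selected; $N=|\mathcal S'|=\binom nk$. On $\mathbb C^{N}$ with basis $\{|z\rangle:z\in\mathcal S'\}$ (the indexed feasible subspace), $H_C$ is diagonal with $H_C|z\rangle=C(z)|z\rangle$ and $H_M$ is the $N\times N$ all-ones matrix (equivalent up to identity to the complete-graph adjacency matrix). $\mathfrak g_{\mathrm{QWOA},k\text{-Densest-Subgraph}}$ is the real Lie algebra generated by $iH_C$ and $iH_M$ (smallest real subspace containing them and closed under commutators); its dimension is its real dimension. *)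

theory Defs
  imports "HOL-Analysis.Analysis" "HOL-Library.Function_Algebras"
begin

definition simple_graph :: "nat \<Rightarrow> nat set set \<Rightarrow> bool" where
  "simple_graph n E \<longleftrightarrow> (\<forall>e\<in>E. e \<subseteq> {1..n} \<and> card e = 2)"

text \<open>Feasible solutions: Hamming-weight-k bitstrings, identified with k-subsets of {1..n}.\<close>
definition feasible :: "nat \<Rightarrow> nat \<Rightarrow> nat set set" where
  "feasible n k = {z. z \<subseteq> {1..n} \<and> card z = k}"

definition kds_cost :: "nat set set \<Rightarrow> nat set \<Rightarrow> nat" where
  "kds_cost E z = card {e\<in>E. e \<subseteq> z}"

text \<open>Operators on C^N with basis indexed by the feasible set, as matrices
  (functions of row/column index, zero outside the feasible set).\<close>
type_synonym cmat = "nat set \<Rightarrow> nat set \<Rightarrow> complex"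

definition H_C :: "nat \<Rightarrow> nat \<Rightarrow> nat set set \<Rightarrow> cmat" where
  "H_C n k E = (\<lambda>z w. if z \<in> feasible n k \<and> w = z then of_nat (kds_cost E z) else 0)"

definition H_M :: "nat \<Rightarrow> nat \<Rightarrow> cmat" where
  "H_M n k = (\<lambda>z w. if z \<in> feasible n k \<and> w \<in> feasible n k then 1 else 0)"

definition mmult :: "nat set set \<Rightarrow> cmat \<Rightarrow> cmat \<Rightarrow> cmat" where
  "mmult F A B = (\<lambda>z w. \<Sum>y\<in>F. A z y * B y w)"

definition commutator :: "nat set set \<Rightarrow> cmat \<Rightarrow> cmat \<Rightarrow> cmat" where
  "commutator F A B = mmult F A B - mmult F B A"

definition rscale :: "real \<Rightarrow> cmat \<Rightarrow> cmat" where
  "rscale r A = (\<lambda>z w. complex_of_real r * A z w)"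

inductive_set lie_closure :: "nat set set \<Rightarrow> cmat set \<Rightarrow> cmat set"
  for F :: "nat set set" and G :: "cmat set" where
  gen: "A \<in> G \<Longrightarrow> A \<in> lie_closure F G"
| zero: "0 \<in> lie_closure F G"
| add: "A \<in> lie_closure F G \<Longrightarrow> B \<in> lie_closure F G \<Longrightarrow> A + B \<in> lie_closure F G"
| scale: "A \<in> lie_closure F G \<Longrightarrow> rscale r A \<in> lie_closure F G"
| comm: "A \<in> lie_closure F G \<Longrightarrow> B \<in> lie_closure F G \<Longrightarrow> commutator F A B \<in> lie_closure F G"

definition qwoa_dla :: "nat \<Rightarrow> nat \<Rightarrow> nat set set \<Rightarrow> cmat set" where
  "qwoa_dla n k E = lie_closure (feasible n k)
     {(\<lambda>z w. \<i> * H_C n k E z w), (\<lambda>z w. \<i> * H_M n k z w)}"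

definition real_dim :: "cmat set \<Rightarrow> nat" where
  "real_dim S = vector_space.dim rscale S"

end

theory Submission
  imports Defs
begin

lemma vs_rscale: "vector_space rscale"
  by unfold_locales (auto simp: rscale_def fun_eq_iff algebra_simps)

definition rep :: "nat set set \<Rightarrow> (nat set \<Rightarrow> nat) \<Rightarrow> (nat \<Rightarrow> complex) \<Rightarrow> (nat \<Rightarrow> nat \<Rightarrow> complex) \<Rightarrow> cmat" where
  "rep F cst \<phi> f = (\<lambda>z w. (if z \<in> F \<and> w = z then \<phi> (cst z) else 0)
      + (if z \<in> F \<and> w \<in> F then f (cst z) (cst w) else 0))"

lemma mmult_rep:
  assumes "finite F"
  shows "mmult F (rep F cst \<phi> f) (rep F cst \<psi> g) = rep F cst (\<lambda>c. \<phi> c * \<psi> c)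
     (\<lambda>c d. \<phi> c * g c d + f c d * \<psi> d + (\<Sum>y\<in>F. f c (cst y) * g (cst y) d))"
proof (intro ext)
  fix z w
  show "mmult F (rep F cst \<phi> f) (rep F cst \<psi> g) z w = rep F cst (\<lambda>c. \<phi> c * \<psi> c)
     (\<lambda>c d. \<phi> c * g c d + f c d * \<psi> d + (\<Sum>y\<in>F. f c (cst y) * g (cst y) d)) z w"
  proof (cases "z \<in> F")
    case False then show ?thesis by (simp add: mmult_def rep_def)
  next
    case True
    have e: "rep F cst \<phi> f z y * rep F cst \<psi> g y w =
      (if y = z \<and> w = z then \<phi> (cst z) * \<psi> (cst z) else 0)
      + (if y = z \<and> w \<in> F then \<phi> (cst z) * g (cst z) (cst w) else 0)
      + (if y = w then f (cst z) (cst w) * \<psi> (cst w) else 0)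
      + (if w \<in> F then f (cst z) (cst y) * g (cst y) (cst w) else 0)" if "y \<in> F" for y
      using True that by (auto simp: rep_def algebra_simps)
    have "mmult F (rep F cst \<phi> f) (rep F cst \<psi> g) z w =
      (\<Sum>y\<in>F. (if y = z \<and> w = z then \<phi> (cst z) * \<psi> (cst z) else 0))
      + (\<Sum>y\<in>F. (if y = z \<and> w \<in> F then \<phi> (cst z) * g (cst z) (cst w) else 0))
      + (\<Sum>y\<in>F. (if y = w then f (cst z) (cst w) * \<psi> (cst w) else 0))
      + (\<Sum>y\<in>F. (if w \<in> F then f (cst z) (cst y) * g (cst y) (cst w) else 0))"
      unfolding mmult_def by (simp add: e sum.distrib)
    also have "\<dots> = rep F cst (\<lambda>c. \<phi> c * \<psi> c)
     (\<lambda>c d. \<phi> c * g c d + f c d * \<psi> d + (\<Sum>y\<in>F. f c (cst y) * g (cst y) d)) z w"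
      using True assms by (auto simp: rep_def sum.delta sum.delta' sum.If_cases)
    finally show ?thesis .
  qed
qed

lemma rep_add: "rep F cst \<phi> f + rep F cst \<psi> g = rep F cst (\<lambda>c. \<phi> c + \<psi> c) (\<lambda>c d. f c d + g c d)"
  by (auto simp: rep_def fun_eq_iff)

lemma rep_diff: "rep F cst \<phi> f - rep F cst \<psi> g = rep F cst (\<lambda>c. \<phi> c - \<psi> c) (\<lambda>c d. f c d - g c d)"
  by (auto simp: rep_def fun_eq_iff)

lemma rep_scale: "rscale r (rep F cst \<phi> f) = rep F cst (\<lambda>c. of_real r * \<phi> c) (\<lambda>c d. of_real r * f c d)"
  by (auto simp: rep_def rscale_def fun_eq_iff algebra_simps)

definition SS :: "nat set set \<Rightarrow> (nat set \<Rightarrow> nat) \<Rightarrow> cmat set" where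
  "SS F cst = {rep F cst (\<lambda>c. a * of_nat c) f | a f. True}"

lemma SS_comm:
  assumes "finite F" "A \<in> SS F cst" "B \<in> SS F cst"
  shows "commutator F A B \<in> SS F cst"
proof -
  obtain a f where A: "A = rep F cst (\<lambda>c. a * of_nat c) f" using assms(2) by (auto simp: SS_def)
  obtain b g where B: "B = rep F cst (\<lambda>c. b * of_nat c) g" using assms(3) by (auto simp: SS_def)
  have eq: "(\<lambda>c::nat. a * of_nat c * (b * of_nat c) - b * of_nat c * (a * of_nat c)) = (\<lambda>c. 0 * of_nat c)"
    by (simp add: fun_eq_iff algebra_simps)
  show ?thesis
    unfolding A B commutator_def mmult_rep[OF assms(1)] rep_diff eq SS_def by blast
qed

lemma SS_closed:
  assumes "finite F" "G \<subseteq> SS F cst"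
  shows "lie_closure F G \<subseteq> SS F cst"
proof
  fix X assume "X \<in> lie_closure F G"
  then show "X \<in> SS F cst"
  proof induction
    case (gen A) then show ?case using assms by auto
  next
    case zero
    have "(0::cmat) = rep F cst (\<lambda>c. 0 * of_nat c) (\<lambda>c d. 0)" by (simp add: rep_def fun_eq_iff)
    then show ?case unfolding SS_def by blast
  next
    case (add A B)
    then obtain a f b g where "A = rep F cst (\<lambda>c. a * of_nat c) f" "B = rep F cst (\<lambda>c. b * of_nat c) g"
      by (auto simp: SS_def)
    then have "A + B = rep F cst (\<lambda>c. (a + b) * of_nat c) (\<lambda>c d. f c d + g c d)"
      by (simp add: rep_add algebra_simps)
    then show ?case unfolding SS_def by blast
  next
    case (scale A r)
    then obtain a f where "A = rep F cst (\<lambda>c. a * of_nat c) f" by (auto simp: SS_def)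
    then have "rscale r A = rep F cst (\<lambda>c. (of_real r * a) * of_nat c) (\<lambda>c d. of_real r * f c d)"
      by (simp add: rep_scale algebra_simps)
    then show ?case unfolding SS_def by blast
  next
    case (comm A B) then show ?case using SS_comm assms(1) by blast
  qed
qed

lemma sum_apply2: "(sum h A :: cmat) z w = (\<Sum>p\<in>A. h p z w)"
  by (induct A rule: infinite_finite_induct) auto

definition Dg :: "nat set set \<Rightarrow> (nat set \<Rightarrow> nat) \<Rightarrow> complex \<Rightarrow> cmat" where
  "Dg F cst a = rep F cst (\<lambda>c. a * of_nat c) (\<lambda>_ _. 0)"

definition Eb :: "nat set set \<Rightarrow> (nat set \<Rightarrow> nat) \<Rightarrow> complex \<Rightarrow> nat \<times> nat \<Rightarrow> cmat" where
  "Eb F cst a p = rep F cst (\<lambda>_. 0) (\<lambda>c d. if (c, d) = p then a else 0)"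

lemma SS_decomp:
  assumes "\<forall>z\<in>F. cst z \<le> K"
  shows "rep F cst (\<lambda>c. a * of_nat c) f = rscale (Re a) (Dg F cst 1) + rscale (Im a) (Dg F cst \<i>)
     + (\<Sum>p\<in>{..K}\<times>{..K}. rscale (Re (f (fst p) (snd p))) (Eb F cst 1 p)
          + rscale (Im (f (fst p) (snd p))) (Eb F cst \<i> p))"
proof (intro ext)
  fix z w
  have ca: "a = of_real (Re a) + of_real (Im a) * \<i>" by (simp add: complex_eq_iff)
  have cf: "\<And>x. x = of_real (Re x) + of_real (Im x) * \<i>" by (simp add: complex_eq_iff)
  have R: "(rscale (Re a) (Dg F cst 1) + rscale (Im a) (Dg F cst \<i>)
     + (\<Sum>p\<in>{..K}\<times>{..K}. rscale (Re (f (fst p) (snd p))) (Eb F cst 1 p)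
          + rscale (Im (f (fst p) (snd p))) (Eb F cst \<i> p))) z w
     = of_real (Re a) * Dg F cst 1 z w + of_real (Im a) * Dg F cst \<i> z w
       + (\<Sum>p\<in>{..K}\<times>{..K}. of_real (Re (f (fst p) (snd p))) * Eb F cst 1 p z w
          + of_real (Im (f (fst p) (snd p))) * Eb F cst \<i> p z w)"
    by (simp add: sum_apply2 rscale_def)
  have s: "(\<Sum>p\<in>{..K}\<times>{..K}. of_real (Re (f (fst p) (snd p))) * Eb F cst 1 p z w
          + of_real (Im (f (fst p) (snd p))) * Eb F cst \<i> p z w)
        = (\<Sum>p\<in>{..K}\<times>{..K}. if p = (cst z, cst w) then (if z \<in> F \<and> w \<in> F then f (cst z) (cst w) else 0) else 0)"
    apply (rule sum.cong[OF refl])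
    subgoal for p using cf[of "f (fst p) (snd p)"] by (auto simp: Eb_def rep_def algebra_simps)
    done
  have "z \<in> F \<Longrightarrow> (cst z, cst w) \<in> {..K}\<times>{..K} \<or> w \<notin> F" using assms by auto
  note zz = this
  show "rep F cst (\<lambda>c. a * of_nat c) f z w = (rscale (Re a) (Dg F cst 1) + rscale (Im a) (Dg F cst \<i>)
     + (\<Sum>p\<in>{..K}\<times>{..K}. rscale (Re (f (fst p) (snd p))) (Eb F cst 1 p)
          + rscale (Im (f (fst p) (snd p))) (Eb F cst \<i> p))) z w"
    using zz unfolding R s
    by (subst ca) (auto simp: Dg_def rep_def algebra_simps)
qed

lemma cost_bound:
  assumes "simple_graph n E" "z \<in> feasible n k" "k \<le> n"
  shows "kds_cost E z \<le> n ^ 2"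
proof -
  have fz: "finite z" and cz: "card z = k" using assms(2) unfolding feasible_def
    by (auto intro: finite_subset)
  have "{e\<in>E. e \<subseteq> z} \<subseteq> {B. B \<subseteq> z \<and> card B = 2}" using assms(1) unfolding simple_graph_def by auto
  then have "kds_cost E z \<le> card {B. B \<subseteq> z \<and> card B = 2}"
    unfolding kds_cost_def by (intro card_mono) (auto simp: fz)
  also have "\<dots> = k choose 2" using n_subsets[OF fz] cz by simp
  also have "\<dots> \<le> k ^ 2"
  proof (cases "2 \<le> k")
    case True then show ?thesis using binomial_le_pow by blast
  next
    case False then show ?thesis by (simp add: binomial_eq_0)
  qed
  also have "\<dots> \<le> n ^ 2" using assms(3) by (simp add: power_mono)
  finally show ?thesis .
qed

lemma dim_bound:
  assumes "simple_graph n E" "k \<le> n"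
  shows "real_dim (qwoa_dla n k E) \<le> 2 + 2 * (n^2 + 1)^2"
proof -
  define F where "F = feasible n k"
  define cst where "cst = kds_cost E"
  define K where "K = n ^ 2"
  have finF: "finite F" unfolding F_def feasible_def
    by (rule finite_subset[of _ "Pow {1..n}"]) auto
  have cb: "\<forall>z\<in>F. cst z \<le> K" using cost_bound[OF assms(1) _ assms(2)] unfolding F_def cst_def K_def by blast
  define P where "P = {..K}\<times>{..K}"
  define G where "G = {Dg F cst 1, Dg F cst \<i>} \<union> Eb F cst 1 ` P \<union> Eb F cst \<i> ` P"
  interpret V: vector_space rscale by (rule vs_rscale)
  have gens: "{(\<lambda>z w. \<i> * H_C n k E z w), (\<lambda>z w. \<i> * H_M n k z w)} \<subseteq> SS F cst"
  proof -
    have "(\<lambda>z w. \<i> * H_C n k E z w) = rep F cst (\<lambda>c. \<i> * of_nat c) (\<lambda>_ _. 0)"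
      by (auto simp: fun_eq_iff H_C_def rep_def F_def cst_def)
    moreover have "(\<lambda>z w. \<i> * H_M n k z w) = rep F cst (\<lambda>c. 0 * of_nat c) (\<lambda>_ _. \<i>)"
      by (auto simp: fun_eq_iff H_M_def rep_def F_def cst_def)
    ultimately show ?thesis unfolding SS_def by blast
  qed
  have "qwoa_dla n k E \<subseteq> SS F cst"
    unfolding qwoa_dla_def F_def[symmetric] by (rule SS_closed[OF finF gens])
  also have "SS F cst \<subseteq> V.span G"
  proof
    fix X assume "X \<in> SS F cst"
    then obtain a f where X: "X = rep F cst (\<lambda>c. a * of_nat c) f" unfolding SS_def by blast
    show "X \<in> V.span G"
      unfolding X SS_decomp[OF cb] P_def[symmetric]
      by (intro V.span_add V.span_scale V.span_sum V.span_base) (auto simp: G_def)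
  qed
  finally have sub: "qwoa_dla n k E \<subseteq> V.span G" .
  have "finite G" unfolding G_def P_def by auto
  then have "real_dim (qwoa_dla n k E) \<le> card G"
    unfolding real_dim_def using V.dim_le_card[OF sub] by blast
  also have "card G \<le> 2 + (card P + card P)"
  proof -
    have c1: "card {Dg F cst 1, Dg F cst \<i>} \<le> 2" by (simp add: card_insert_le_m1)
    have c2: "card (Eb F cst 1 ` P) \<le> card P" by (rule card_image_le) (simp add: P_def)
    have c3: "card (Eb F cst \<i> ` P) \<le> card P" by (rule card_image_le) (simp add: P_def)
    have "card G \<le> card ({Dg F cst 1, Dg F cst \<i>} \<union> Eb F cst 1 ` P) + card (Eb F cst \<i> ` P)"
      unfolding G_def by (rule card_Un_le)
    also have "\<dots> \<le> card {Dg F cst 1, Dg F cst \<i>} + card (Eb F cst 1 ` P) + card (Eb F cst \<i> ` P)"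
      by (intro add_mono card_Un_le order.refl)
    finally show ?thesis using c1 c2 c3 by linarith
  qed
  also have "card P = (n^2+1)^2" unfolding P_def K_def by (simp add: power2_eq_square)
  finally show ?thesis by simp
qed

theorem corollary4:
  "\<exists>c::real. \<forall>(n::nat) (k::nat) (E::nat set set).
     1 < k \<longrightarrow> k < n \<longrightarrow> simple_graph n E \<longrightarrow>
     real (real_dim (qwoa_dla n k E)) \<le> c * real n ^ 4"
proof (intro exI[of _ 10] allI impI)
  fix n k :: nat and E
  assume "1 < k" "k < n" "simple_graph n E"
  then have d: "real (real_dim (qwoa_dla n k E)) \<le> real (2 + 2 * (n^2 + 1)^2)"
    using dim_bound by (simp only: of_nat_le_iff)
  have n1: "(1::real) \<le> real n" using \<open>1 < k\<close> \<open>k < n\<close> by simp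
  have "real (2 + 2 * (n^2 + 1)^2) = 2 * real n ^ 4 + 4 * real n ^ 2 + 4"
    by (simp add: power2_eq_square power4_eq_xxxx algebra_simps)
  also have "\<dots> \<le> 10 * real n ^ 4"
  proof -
    have a: "real n ^ 2 \<le> real n ^ 4" using n1 by (intro power_increasing) auto
    have b: "1 \<le> real n ^ 4" using n1 by simp
    show ?thesis using a b by simp
  qed
  finally show "real (real_dim (qwoa_dla n k E)) \<le> 10 * real n ^ 4" using d by simp
qed

end
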